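(* For positive integers $r,m$ with $r<m$, \[ \sum_{n=1}^{\infty}\frac{h_n^{(r)}}{n^{m}}=\frac{1}{(r-1)!}\sum_{k=1}^{r}{r\brack k}\left\{\zeta_H(m-k+1)-H_{r-1}\,\zeta(m-k+1)+\sum_{j=1}^{r-1}\mu(m-k+1,j)\right\}, \] where $\mu(s,j)=\sum_{n=1}^{\infty}\frac{1}{n^{s}(n+j)}$.
   Context: Hyperharmonic numbers: $h_n^{(0)}=1/n$ for $n\ge1$, and for $r\ge1$, $h_n^{(r)}=\sum_{j=1}^{n}h_j^{(r-1)}$. $H_n=\sum_{j=1}^n 1/j$ is the $n$-th harmonic number, $H_0=0$. $\zeta$ is the Riemann zeta function and $\zeta_H(s)=\sum_{n=1}^{\infty}H_n/n^{s}$ for integers $s\ge2$. ${r\brack k}$ denotes the unsigned Stirling number of the first kind, defined by $x(x+1)\cdots(x+r-1)=\sum_{k=0}^{r}{r\brack k}x^k$. *)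

theory Defs
  imports "HOL-Analysis.Analysis" "HOL-Combinatorics.Stirling"
begin

text \<open>Hyperharmonic numbers h_n^(r): hyperharm r n. Only n >= 1 is meaningful.\<close>
fun hyperharm :: "nat \<Rightarrow> nat \<Rightarrow> real" where
  "hyperharm 0 n = 1 / real n"
| "hyperharm (Suc r) n = (\<Sum>j=1..n. hyperharm r j)"

definition zeta_nat :: "nat \<Rightarrow> real" where
  "zeta_nat s = (\<Sum>n. 1 / real (Suc n) ^ s)"

definition zeta_H :: "nat \<Rightarrow> real" where
  "zeta_H s = (\<Sum>n. harm (Suc n) / real (Suc n) ^ s)"

definition mu :: "nat \<Rightarrow> nat \<Rightarrow> real" where
  "mu s j = (\<Sum>n. 1 / (real (Suc n) ^ s * real (Suc n + j)))"

end

theory Submission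
  imports Defs
begin


lemma harm_add: "harm (a + b) = (harm a :: real) + (\<Sum>j=1..b. 1 / real (a + j))"
  by (induction b) (simp_all add: harm_Suc field_simps)

lemma hh1: "hyperharm (Suc 0) n = harm n"
  by (simp add: harm_def divide_inverse)

lemma closed: "hyperharm (Suc s) n = real ((n+s) choose s) * (harm (n+s) - harm s)"
proof (induction s arbitrary: n)
  case 0
  then show ?case by (simp add: harm_def divide_inverse)
next
  case (Suc s)
  have "(\<Sum>j=1..n. real ((j+s) choose s) * (harm (j+s) - harm s)) =
        real ((n+Suc s) choose Suc s) * (harm (n+Suc s) - harm (Suc s))" for n
  proof (induction n)
    case 0 then show ?case by simp
  next
    case (Suc n)
    have b: "real (Suc s) * real (Suc (n + Suc s) choose Suc s) = real (Suc (n+Suc s)) * real ((n+Suc s) choose s)"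
      using Suc_times_binomial[of s "n + Suc s"] by (metis of_nat_mult)
    have p: "(Suc (n + Suc s) choose Suc s) = ((n + Suc s) choose Suc s) + ((n+Suc s) choose s)"
      by simp
    have "(\<Sum>j=1..Suc n. real ((j+s) choose s) * (harm (j+s) - harm s))
       = real ((n+Suc s) choose Suc s) * (harm (n+Suc s) - harm (Suc s)) + real ((Suc n+s) choose s) * (harm (Suc n+s) - harm s)"
      using Suc by simp
    also have "\<dots> = real (Suc (n + Suc s) choose Suc s) * (harm (Suc (n+Suc s)) - harm (Suc s))"
    proof -
      define A where "A = real ((n+Suc s) choose Suc s)"
      define B where "B = real ((n+Suc s) choose s)"
      define H where "H = (harm (n + Suc s) :: real)"
      have e1: "real (Suc (n + Suc s) choose Suc s) = A + B" unfolding A_def B_def using p by simp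
      have e2: "harm (Suc (n+Suc s)) = H + 1 / real (Suc (n + Suc s))" by (simp add: H_def harm_Suc divide_inverse)
      have e3: "harm (Suc s) = (harm s :: real) + 1 / real (Suc s)" by (simp add: harm_Suc divide_inverse)
      have e4: "(Suc n + s) = n + Suc s" by simp
      have bb: "real (Suc s) * (A + B) = real (Suc (n+Suc s)) * B" using b e1 unfolding B_def by (simp only:)
      have q: "(A+B) / real (Suc (n+Suc s)) = B / real (Suc s)"
        using bb by (simp add: field_simps)
      have "(A+B) * (H + 1 / real (Suc (n + Suc s)) - harm (Suc s))
          = (A+B) * (H - harm (Suc s)) + (A+B) / real (Suc (n+Suc s))" by (simp add: algebra_simps)
      also have "\<dots> = A * (H - harm (Suc s)) + B * (H - harm s)" unfolding q e3 by (simp add: algebra_simps add_divide_distrib)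
      finally have "A * (H - harm (Suc s)) + B * (H - harm s) = (A+B) * (H + 1 / real (Suc (n + Suc s)) - harm (Suc s))" by simp
      then show ?thesis unfolding e1 e2 e4 A_def[symmetric] B_def[symmetric] H_def[symmetric] by simp
    qed
    finally show ?case by simp
  qed
  then show ?case using Suc by simp
qed


lemma sqrt_step:
  fixes n :: nat
  shows "1 / real (Suc n) \<le> 2 * sqrt (real (Suc n)) - 2 * sqrt (real n)"
proof -
  define a where "a = sqrt (real n)"
  define b where "b = sqrt (real (Suc n))"
  have a0: "a \<ge> 0" unfolding a_def by simp
  have b1: "b \<ge> 1" unfolding b_def by simp
  have ab: "b^2 = a^2 + 1" unfolding a_def b_def by simp
  have "a < b" using ab a0 b1 by (smt (verit) power_mono)
  have bb: "b^2 \<ge> b" using b1 by (simp add: power2_eq_square)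
  have ba: "b^2 \<ge> a" using ab a0 by (smt (verit) \<open>a < b\<close> bb)
  have e: "(b - a) * (b + a) = 1" using ab by (simp add: algebra_simps power2_eq_square)
  have "1 \<le> 2 * (b - a) * b^2"
  proof -
    have "(b - a) * (b + a) \<le> (b - a) * (2 * b^2)"
      using bb ba \<open>a < b\<close> by (intro mult_left_mono) auto
    then show ?thesis using e by (simp add: algebra_simps)
  qed
  then have "1 / b^2 \<le> 2 * b - 2 * a" using b1 by (simp add: field_simps)
  then show ?thesis unfolding a_def b_def by simp
qed

lemma harm_sqrt: "harm n \<le> 2 * sqrt (real n)"
proof (induction n)
  case 0 then show ?case by (simp add: harm_def)
next
  case (Suc n)
  then show ?case using sqrt_step[of n] by (simp add: harm_Suc divide_inverse)
qed

lemma summable_zeta: "e \<ge> 2 \<Longrightarrow> summable (\<lambda>n. 1 / real (Suc n) ^ e)"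
  using inverse_power_summable[of e, where 'a=real] summable_Suc_iff[of "\<lambda>n. inverse (real n ^ e)"]
  by (simp add: divide_inverse)

lemma summable_zetaH: assumes "e \<ge> 2" shows "summable (\<lambda>n. harm (Suc n) / real (Suc n) ^ e)"
proof (rule summable_comparison_test')
  have "summable (\<lambda>n. real n powr (-3/2))" by (simp add: summable_real_powr_iff)
  then have "summable (\<lambda>n. real (Suc n) powr (-3/2))" by (rule summable_Suc_iff[THEN iffD2])
  then show "summable (\<lambda>n. 2 * real (Suc n) powr (-3/2))" by (rule summable_mult)
  show "norm (harm (Suc n) / real (Suc n) ^ e) \<le> 2 * real (Suc n) powr (-3/2)" for n
  proof -
    define x where "x = real (Suc n)"
    have x1: "x \<ge> 1" unfolding x_def by simp
    have "norm (harm (Suc n) / real (Suc n) ^ e) = harm (Suc n) / x ^ e"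
      unfolding x_def using harm_nonneg[of "Suc n", where 'a=real] by simp
    also have "\<dots> \<le> 2 * sqrt x / x ^ e"
      using harm_sqrt[of "Suc n"] x1 unfolding x_def by (intro divide_right_mono) auto
    also have "\<dots> \<le> 2 * sqrt x / x ^ 2"
      using x1 assms by (intro divide_left_mono power_increasing mult_pos_pos) auto
    also have "\<dots> = 2 * x powr (-3/2)"
    proof -
      have "sqrt x / x^2 = x powr (1/2) / x powr 2"
        using x1 by (simp add: powr_half_sqrt powr_numeral)
      also have "\<dots> = x powr (1/2 - 2)" by (rule powr_diff[symmetric])
      also have "\<dots> = x powr (-3/2)" by simp
      finally show ?thesis by simp
    qed
    finally show ?thesis unfolding x_def .
  qed
qed

lemma summable_mu: assumes "e \<ge> 2" shows "summable (\<lambda>n. 1 / (real (Suc n) ^ e * real (Suc n + j)))"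
proof (rule summable_comparison_test')
  show "summable (\<lambda>n. 1 / real (Suc n) ^ e)" using assms by (rule summable_zeta)
  show "norm (1 / (real (Suc n) ^ e * real (Suc n + j))) \<le> 1 / real (Suc n) ^ e" for n
  proof -
    define a where "a = real (Suc n) ^ e"
    define b where "b = real (Suc n + j)"
    have a0: "a > 0" and b1: "b \<ge> 1" unfolding a_def b_def by auto
    have "norm (1 / (a * b)) = 1 / (a * b)" using a0 b1 by simp
    also have "\<dots> \<le> 1 / a" using a0 b1 by (intro divide_left_mono) (auto simp: mult_pos_pos)
    finally show ?thesis unfolding a_def b_def .
  qed
qed



definition G :: "nat \<Rightarrow> nat \<Rightarrow> nat \<Rightarrow> nat \<Rightarrow> real" where
  "G s m k n = harm (Suc n) / real (Suc n) ^ (m - k + 1) - harm s * (1 / real (Suc n) ^ (m - k + 1))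
     + (\<Sum>j=1..s. 1 / (real (Suc n) ^ (m - k + 1) * real (Suc n + j)))"

lemma poch_sum: "pochhammer (x::real) (Suc s) = (\<Sum>k=1..Suc s. real (stirling (Suc s) k) * x ^ k)"
proof -
  have "pochhammer x (Suc s) = (\<Sum>k\<le>Suc s. real (stirling (Suc s) k) * x ^ k)"
    by (rule stirling_pochhammer[symmetric])
  also have "\<dots> = (\<Sum>k=0..Suc s. real (stirling (Suc s) k) * x ^ k)" by (simp add: atMost_atLeast0)
  also have "\<dots> = (\<Sum>k=1..Suc s. real (stirling (Suc s) k) * x ^ k)"
    by (subst sum.atLeast_Suc_atMost) auto
  finally show ?thesis .
qed

lemma binom_poch: "real ((Suc n + s) choose s) = pochhammer (real (Suc n)) (Suc s) / (real (Suc n) * fact s)"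
proof -
  have "real ((Suc n + s) choose s) = real (Suc n + s) gchoose s" by (rule binomial_gbinomial)
  also have "\<dots> = pochhammer (real (Suc n) + 1) s / fact s"
    by (simp add: gbinomial_pochhammer' algebra_simps)
  also have "\<dots> = pochhammer (real (Suc n)) (Suc s) / (real (Suc n) * fact s)"
    by (simp add: pochhammer_rec del: of_nat_Suc)
  finally show ?thesis .
qed

lemma term_eq:
  assumes "Suc s < m"
  shows "hyperharm (Suc s) (Suc n) / real (Suc n) ^ m
       = 1 / fact s * (\<Sum>k=1..Suc s. real (stirling (Suc s) k) * G s m k n)"
proof -
  define x where "x = real (Suc n)"
  have x0: "x > 0" unfolding x_def by simp
  define J where "J = (\<Sum>j=1..s. 1 / real (Suc n + j))"
  define D where "D = harm (Suc n) + J - harm s"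
  have hD: "hyperharm (Suc s) (Suc n) = pochhammer x (Suc s) / (x * fact s) * D"
    unfolding closed binom_poch D_def J_def x_def using harm_add[of "Suc n" s] by simp
  have GD: "G s m k n = D / x ^ (m - k + 1)" for k
  proof -
    have h: "(\<Sum>j=1..s. 1 / (x ^ (m - k + 1) * real (Suc n + j))) = J / x ^ (m - k + 1)"
      unfolding J_def sum_divide_distrib by (intro sum.cong) (auto simp: field_simps)
    have "G s m k n = harm (Suc n) / x ^ (m - k + 1) - harm s * (1 / x ^ (m - k + 1)) + J / x ^ (m - k + 1)"
      unfolding G_def x_def[symmetric] h by (rule refl)
    then show ?thesis unfolding D_def by (simp add: add_divide_distrib diff_divide_distrib)
  qed
  have pk: "x ^ k / (x * x ^ m) = 1 / x ^ (m - k + 1)" if "k \<le> m" for k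
  proof -
    have "x ^ (m - k + 1) * x ^ k = x * x ^ m"
      using that by (simp flip: power_add add: algebra_simps)
    then show ?thesis using x0 by (simp add: field_simps)
  qed
  have "hyperharm (Suc s) (Suc n) / real (Suc n) ^ m
      = (\<Sum>k=1..Suc s. real (stirling (Suc s) k) * x ^ k) * (D / (x * fact s * x ^ m))"
    unfolding hD poch_sum x_def[symmetric] by (simp add: field_simps)
  also have "\<dots> = (\<Sum>k=1..Suc s. 1 / fact s * (real (stirling (Suc s) k) * G s m k n))"
    unfolding sum_distrib_right
  proof (intro sum.cong refl)
    fix k assume "k \<in> {1..Suc s}"
    then have "k \<le> m" using assms by auto
    have "real (stirling (Suc s) k) * x ^ k * (D / (x * fact s * x ^ m))
        = real (stirling (Suc s) k) * (x ^ k / (x * x ^ m)) * D / fact s" by (simp add: field_simps)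
    also have "\<dots> = 1 / fact s * (real (stirling (Suc s) k) * G s m k n)"
      unfolding pk[OF \<open>k \<le> m\<close>] GD by (simp add: field_simps)
    finally show "real (stirling (Suc s) k) * x ^ k * (D / (x * fact s * x ^ m))
        = 1 / fact s * (real (stirling (Suc s) k) * G s m k n)" .
  qed
  also have "\<dots> = 1 / fact s * (\<Sum>k=1..Suc s. real (stirling (Suc s) k) * G s m k n)"
    by (rule sum_distrib_left[symmetric])
  finally show ?thesis .
qed

lemma G_sums:
  assumes "e = m - k + 1" "e \<ge> 2"
  shows "summable (G s m k)"
    and "suminf (G s m k) = zeta_H e - harm s * zeta_nat e + (\<Sum>j=1..s. mu e j)"
proof -
  have s1: "summable (\<lambda>n. harm (Suc n) / real (Suc n) ^ e)" using assms(2) by (rule summable_zetaH)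
  have s2: "summable (\<lambda>n. harm s * (1 / real (Suc n) ^ e))"
    using summable_zeta[OF assms(2)] by (rule summable_mult)
  have s3: "summable (\<lambda>n. 1 / (real (Suc n) ^ e * real (Suc n + j)))" for j
    using assms(2) by (rule summable_mu)
  have s4: "summable (\<lambda>n. \<Sum>j=1..s. 1 / (real (Suc n) ^ e * real (Suc n + j)))"
    using s3 by (rule summable_sum)
  have eq: "G s m k = (\<lambda>n. (harm (Suc n) / real (Suc n) ^ e - harm s * (1 / real (Suc n) ^ e))
     + (\<Sum>j=1..s. 1 / (real (Suc n) ^ e * real (Suc n + j))))"
    unfolding G_def assms(1) by auto
  show "summable (G s m k)" unfolding eq using s1 s2 s4 by (intro summable_add summable_diff)
  have "suminf (G s m k) = (suminf (\<lambda>n. harm (Suc n) / real (Suc n) ^ e) - suminf (\<lambda>n. harm s * (1 / real (Suc n) ^ e)))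
       + suminf (\<lambda>n. \<Sum>j=1..s. 1 / (real (Suc n) ^ e * real (Suc n + j)))"
    unfolding eq using s1 s2 s4 by (simp add: suminf_add suminf_diff summable_diff)
  also have "\<dots> = zeta_H e - harm s * zeta_nat e + (\<Sum>j=1..s. mu e j)"
  proof -
    have z1: "(\<Sum>n. harm s * (1 / real (Suc n) ^ e)) = harm s * zeta_nat e"
      unfolding zeta_nat_def by (rule suminf_mult[OF summable_zeta[OF assms(2)]])
    have z2: "(\<Sum>n. \<Sum>j=1..s. 1 / (real (Suc n) ^ e * real (Suc n + j))) = (\<Sum>j=1..s. mu e j)"
      unfolding mu_def by (intro suminf_sum s3)
    show ?thesis unfolding z1 z2 zeta_H_def by (rule refl)
  qed
  finally show "suminf (G s m k) = zeta_H e - harm s * zeta_nat e + (\<Sum>j=1..s. mu e j)" .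
qed

theorem theorem2:
  fixes r m :: nat
  assumes "1 \<le> r" and "r < m"
  shows "(\<Sum>n. hyperharm r (Suc n) / real (Suc n) ^ m) =
    1 / fact (r - 1) *
    (\<Sum>k=1..r. real (stirling r k) *
       (zeta_H (m - k + 1) - harm (r - 1) * zeta_nat (m - k + 1)
        + (\<Sum>j=1..r-1. mu (m - k + 1) j)))"
proof -
  obtain s where r: "r = Suc s" using assms(1) by (cases r) auto
  have sm: "Suc s < m" using assms r by simp
  have ek: "m - k + 1 \<ge> 2" if "k \<in> {1..Suc s}" for k using that sm by auto
  have sk: "summable (G s m k)" if "k \<in> {1..Suc s}" for k using G_sums(1)[OF refl ek[OF that]] .
  have "(\<Sum>n. hyperharm r (Suc n) / real (Suc n) ^ m)
      = (\<Sum>n. 1 / fact s * (\<Sum>k=1..Suc s. real (stirling (Suc s) k) * G s m k n))"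
    unfolding r using term_eq[OF sm] by simp
  also have "\<dots> = 1 / fact s * (\<Sum>n. (\<Sum>k=1..Suc s. real (stirling (Suc s) k) * G s m k n))"
    using sk by (intro suminf_mult summable_sum summable_mult) auto
  also have "(\<Sum>n. (\<Sum>k=1..Suc s. real (stirling (Suc s) k) * G s m k n))
      = (\<Sum>k=1..Suc s. (\<Sum>n. real (stirling (Suc s) k) * G s m k n))"
    using sk by (intro suminf_sum summable_mult) auto
  also have "\<dots> = (\<Sum>k=1..Suc s. real (stirling (Suc s) k) * (zeta_H (m - k + 1) - harm s * zeta_nat (m - k + 1)
        + (\<Sum>j=1..s. mu (m - k + 1) j)))"
  proof (intro sum.cong refl)
    fix k assume k: "k \<in> {1..Suc s}"
    show "(\<Sum>n. real (stirling (Suc s) k) * G s m k n) = real (stirling (Suc s) k) * (zeta_H (m - k + 1) - harm s * zeta_nat (m - k + 1)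
        + (\<Sum>j=1..s. mu (m - k + 1) j))"
      using G_sums[OF refl ek[OF k]] by (simp add: suminf_mult)
  qed
  finally show ?thesis unfolding r by simp
qed
end
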